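(* Let $0<\mu<1$, $e=(1-\mu,0)$, $s=(-\mu,0)$ and $$V(q)=-\frac{\mu}{|q-e|}-\frac{1-\mu}{|q-s|}-\frac12|q|^2,\qquad q\in\mathbb{R}^2\setminus\{e,s\}.$$ Let $\ell_2,\ell_3$ be the collinear Lagrange points defined in the context, and let $c<\min\{V(\ell_2),V(\ell_3)\}$. Then the set of points $q$ in the bounded Hill's region $\mathfrak{K}_c^b$ at which $\frac{\partial V}{\partial q_2}(q)=0$ is exactly $\mathfrak{K}_c^b\cap\{q_2=0\}$.
   Context: The function $u(x)=V(x,0)$ is strictly concave on each of the intervals $(-\infty,-\mu)$, $(-\mu,1-\mu)$, $(1-\mu,\infty)$ and tends to $-\infty$ at their endpoints. Its unique maxima on these intervals are denoted $\ell_3<-\mu$, $\ell_1\in(-\mu,1-\mu)$ and $\ell_2>1-\mu$ (as points $(\ell_i,0)$). They are critical points of $V$ with $V(\ell_1)<V(\ell_2)$ and $V(\ell_1)<V(\ell_3)$. The Hill's region is $\mathfrak{K}_c=\{q\in\mathbb{R}^2\setminus\{e,s\}:V(q)\le c\}$. For $c<\min\{V(\ell_2),V(\ell_3)\}$ it consists of one unbounded connected component and a bounded part $\mathfrak{K}_c^b$, the union of the bounded components. This bounded part is a single component containing $e,s$ in its closure if $c\ge V(\ell_1)$, and two components, one around each primary, if $c<V(\ell_1)$. *)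

theory Defs
  imports "HOL-Analysis.Analysis"
begin

definition prim_e :: "real \<Rightarrow> real \<times> real" where
  "prim_e \<mu> = (1 - \<mu>, 0)"

definition prim_s :: "real \<Rightarrow> real \<times> real" where
  "prim_s \<mu> = (- \<mu>, 0)"

definition effpot :: "real \<Rightarrow> real \<times> real \<Rightarrow> real" where
  "effpot \<mu> q = - \<mu> / dist q (prim_e \<mu>) - (1 - \<mu>) / dist q (prim_s \<mu>) - (1/2) * (norm q)\<^sup>2"

definition lagr2 :: "real \<Rightarrow> real" where
  "lagr2 \<mu> = (THE x. x > 1 - \<mu> \<and> (\<forall>y. y > 1 - \<mu> \<longrightarrow> effpot \<mu> (y, 0) \<le> effpot \<mu> (x, 0)))"

definition lagr3 :: "real \<Rightarrow> real" where
  "lagr3 \<mu> = (THE x. x < - \<mu> \<and> (\<forall>y. y < - \<mu> \<longrightarrow> effpot \<mu> (y, 0) \<le> effpot \<mu> (x, 0)))"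

definition hill :: "real \<Rightarrow> real \<Rightarrow> (real \<times> real) set" where
  "hill \<mu> c = {q. q \<noteq> prim_e \<mu> \<and> q \<noteq> prim_s \<mu> \<and> effpot \<mu> q \<le> c}"

definition hill_bdd :: "real \<Rightarrow> real \<Rightarrow> (real \<times> real) set" where
  "hill_bdd \<mu> c = {q \<in> hill \<mu> c. bounded (connected_component_set (hill \<mu> c) q)}"

definition dV_dq2 :: "real \<Rightarrow> real \<times> real \<Rightarrow> real" where
  "dV_dq2 \<mu> q = deriv (\<lambda>t. effpot \<mu> (fst q, t)) (snd q)"

end

theory Submission
  imports Defs
begin

lemma effpot_eq: "effpot \<mu> (x,t) = - \<mu> / sqrt((x-(1-\<mu>))\<^sup>2 + t\<^sup>2) - (1-\<mu>)/sqrt((x+\<mu>)\<^sup>2+t\<^sup>2) - (x\<^sup>2+t\<^sup>2)/2"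
  by (simp add: effpot_def dist_Pair_Pair prim_e_def prim_s_def norm_Pair dist_real_def)

lemma F_deriv:
  fixes a b x \<mu> t :: real
  assumes "a\<^sup>2+t\<^sup>2>0" "b\<^sup>2+t\<^sup>2>0"
  shows "((\<lambda>t. - \<mu> / sqrt(a\<^sup>2 + t\<^sup>2) - (1-\<mu>)/sqrt(b\<^sup>2+t\<^sup>2) - (x\<^sup>2+t\<^sup>2)/2) has_real_derivative
     t * (\<mu> / sqrt(a\<^sup>2+t\<^sup>2)^3 + (1-\<mu>)/sqrt(b\<^sup>2+t\<^sup>2)^3 - 1)) (at t)"
  using assms
  apply -
  apply (auto intro!: derivative_eq_intros)
  apply (auto simp: field_simps power3_eq_cube power2_eq_square)
  done

lemma effpot_deriv:
  fixes \<mu> x t a b :: real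
  assumes a_def: "a = x-(1-\<mu>)" and b_def: "b = x+\<mu>"
  assumes "a\<^sup>2+t\<^sup>2>0" "b\<^sup>2+t\<^sup>2>0"
  shows "((\<lambda>t. effpot \<mu> (x,t)) has_real_derivative
     t * (\<mu> / sqrt(a\<^sup>2+t\<^sup>2)^3 + (1-\<mu>)/sqrt(b\<^sup>2+t\<^sup>2)^3 - 1)) (at t)"
  unfolding effpot_eq using F_deriv[OF assms(3,4), of \<mu> x] by (simp add: a_def b_def)

theorem lemma5p1:
  fixes \<mu> c :: real
  assumes "0 < \<mu>" and "\<mu> < 1"
    and "c < min (effpot \<mu> (lagr2 \<mu>, 0)) (effpot \<mu> (lagr3 \<mu>, 0))"
  shows "{q \<in> hill_bdd \<mu> c. dV_dq2 \<mu> q = 0} = hill_bdd \<mu> c \<inter> {q. snd q = 0}"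
proof -
  have main: "snd q = 0 \<longleftrightarrow> dV_dq2 \<mu> q = 0" if qh: "q \<in> hill_bdd \<mu> c" for q
  proof -
    obtain x y where q: "q = (x,y)" by (cases q)
    define a where "a = x-(1-\<mu>)"
    define b where "b = x+\<mu>"
    define W where "W = (\<lambda>t. \<mu> / sqrt(a\<^sup>2+t\<^sup>2)^3 + (1-\<mu>)/sqrt(b\<^sup>2+t\<^sup>2)^3)"
    have H: "q \<in> hill \<mu> c" and bdd: "bounded (connected_component_set (hill \<mu> c) q)"
      using qh by (auto simp: hill_bdd_def)
    have ne: "x \<noteq> 1 - \<mu> \<or> y \<noteq> 0" "x \<noteq> - \<mu> \<or> y \<noteq> 0"
      using H by (auto simp: hill_def q prim_e_def prim_s_def)
    have pos: "a\<^sup>2+t\<^sup>2>0" "b\<^sup>2+t\<^sup>2>0" if "t \<noteq> 0 \<or> y = 0" for t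
      using ne that by (auto simp: a_def b_def intro: add_pos_nonneg add_nonneg_pos)
    have D: "dV_dq2 \<mu> q = y * (W y - 1)"
      unfolding dV_dq2_def q W_def using effpot_deriv[OF a_def b_def pos[of y]]
      by (auto intro!: DERIV_imp_deriv)
    show ?thesis
    proof
      assume "snd q = 0" thus "dV_dq2 \<mu> q = 0" using D q by simp
    next
      assume d0: "dV_dq2 \<mu> q = 0"
      show "snd q = 0"
      proof (rule ccontr)
        assume "snd q \<noteq> 0"
        hence y0: "y \<noteq> 0" using q by simp
        hence W1: "W y = 1" using D d0 by simp
        define R where "R = (\<lambda>s. (x, y * s)) ` atLeast 1"
        have mono: "effpot \<mu> (x, y * s) \<le> effpot \<mu> (x, y)" if "s \<ge> 1" for s
        proof -
          have "effpot \<mu> (x, y * s) \<le> effpot \<mu> (x, y*1)"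
          proof (rule DERIV_nonpos_imp_nonincreasing[where f="\<lambda>s. effpot \<mu> (x, y * s)", OF that])
            fix r assume r1: "1 \<le> r" and r2: "r \<le> s"
            have r: "1 \<le> r \<and> r \<le> s" using r1 r2 by simp
            hence yr: "y * r \<noteq> 0" using y0 by simp
            have d1: "((\<lambda>t. effpot \<mu> (x,t)) has_real_derivative (y * r) * (W (y * r) - 1)) (at (y * r))"
              using effpot_deriv[OF a_def b_def pos[of "y * r"]] yr
              by (simp add: W_def)
            have "((\<lambda>s. effpot \<mu> (x, y * s)) has_real_derivative ((y * r) * (W (y * r) - 1)) * y) (at r)"
              proof -
              have "((\<lambda>s. y * s) has_real_derivative y) (at r)"
                by (auto intro!: derivative_eq_intros)
              from DERIV_chain2[of "\<lambda>t. effpot \<mu> (x,t)", OF d1 this] show ?thesis by simp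
            qed
            moreover have "(y * r) * (W (y * r) - 1) * y \<le> 0"
            proof -
              have yy: "y\<^sup>2 \<le> (y * r)\<^sup>2" using r
                by (simp add: power_mult_distrib) (metis mult_left_mono mult_1_right one_le_power zero_le_power2)
              have s1: "sqrt (a\<^sup>2+y\<^sup>2) \<le> sqrt (a\<^sup>2+(y * r)\<^sup>2)" "sqrt (b\<^sup>2+y\<^sup>2) \<le> sqrt (b\<^sup>2+(y * r)\<^sup>2)"
                using yy by auto
              have p1: "sqrt (a\<^sup>2+y\<^sup>2) > 0" "sqrt (b\<^sup>2+y\<^sup>2) > 0" using pos[of y] y0 by auto
              have "sqrt (a\<^sup>2+y\<^sup>2)^3 \<le> sqrt (a\<^sup>2+(y * r)\<^sup>2)^3" "sqrt (b\<^sup>2+y\<^sup>2)^3 \<le> sqrt (b\<^sup>2+(y * r)\<^sup>2)^3"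
                using s1 p1 by (auto intro!: power_mono)
              hence "\<mu> / sqrt(a\<^sup>2+(y * r)\<^sup>2)^3 \<le> \<mu> / sqrt(a\<^sup>2+y\<^sup>2)^3"
                  "(1-\<mu>) / sqrt(b\<^sup>2+(y * r)\<^sup>2)^3 \<le> (1-\<mu>) / sqrt(b\<^sup>2+y\<^sup>2)^3"
                using p1 assms(1,2) by (auto intro!: divide_left_mono)
              hence "W (y * r) \<le> 1" using W1 unfolding W_def by linarith
              moreover have "(y * r)*y \<ge> 0" using r
                by (metis mult.commute mult.left_commute mult_nonneg_nonneg order_trans zero_le_one zero_le_square)
              ultimately show ?thesis
                by (metis mult.commute mult.left_commute mult_nonneg_nonpos diff_le_0_iff_le)
            qed
            ultimately show "\<exists>d. ((\<lambda>s. effpot \<mu> (x, y * s)) has_real_derivative d) (at r) \<and> d \<le> 0" by blast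
          qed
          thus ?thesis by simp
        qed
        have Rsub: "R \<subseteq> hill \<mu> c"
        proof
          fix z assume "z \<in> R"
          then obtain s where s: "s \<ge> 1" "z = (x, y * s)" by (auto simp: R_def)
          have "y * s \<noteq> 0" using s y0 by simp
          moreover have "effpot \<mu> (x,y) \<le> c" using H q by (simp add: hill_def)
          ultimately show "z \<in> hill \<mu> c" using mono[OF s(1)] s
            by (auto simp: hill_def prim_e_def prim_s_def)
        qed
        have "connected R" unfolding R_def
          by (intro connected_continuous_image) (auto intro!: continuous_intros)
        moreover have "q \<in> R" unfolding R_def q by (rule image_eqI[of _ _ 1]) auto
        ultimately have "R \<subseteq> connected_component_set (hill \<mu> c) q"
          using Rsub by (intro connected_component_maximal) auto
        hence "bounded R" using bdd bounded_subset by blast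
        then obtain B where B: "\<And>z. z \<in> R \<Longrightarrow> norm z \<le> B" by (auto simp: bounded_iff)
        define s where "s = (\<bar>B\<bar> + 1) / \<bar>y\<bar> + 1"
        have s1: "s \<ge> 1" using y0 by (simp add: s_def)
        have "(x, y * s) \<in> R" using s1 by (auto simp: R_def)
        hence "norm (x, y * s) \<le> B" by (rule B)
        moreover have "\<bar>y * s\<bar> \<le> norm (x, y * s)"
          by (metis norm_Pair real_norm_def snd_conv norm_snd_le)
        moreover have "\<bar>y * s\<bar> > \<bar>B\<bar>"
        proof -
          have "\<bar>y * s\<bar> = \<bar>y\<bar> * s" using s1 by (simp add: abs_mult)
          also have "\<dots> = \<bar>B\<bar> + 1 + \<bar>y\<bar>" using y0 by (simp add: s_def field_simps)
          finally show ?thesis using y0 by simp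
        qed
        ultimately show False by linarith
      qed
    qed
  qed
  show ?thesis using main by auto
qed

end
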